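(* Let $\mathbb{F}$ be a field of odd characteristic $p>2$ that is algebraic over $\mathbb{F}_p$. Then \[ SD(\mathbb{F}) = \begin{cases} \operatorname{Aut}(\mathbb{F}) & \text{if } \mathbb{F} \neq \mathbb{F}_5, \\ \{ \mathrm{id}, \ w \mapsto w^3 \} \cong \mathbb{Z}/2\mathbb{Z} & \text{if } \mathbb{F} = \mathbb{F}_5. \end{cases} \]
   Context: For fields $\mathbb{F},\widetilde{\mathbb{F}}$, a map $f:\mathbb{F}\to\widetilde{\mathbb{F}}$ is called an SD-map if for all $x\neq y$ in $\mathbb{F}$ one has $f(x)\neq f(y)$ and \[ f\left(\frac{x+y}{x-y}\right)=\frac{f(x)+f(y)}{f(x)-f(y)}. \] For a field $\mathbb{F}$, $SD(\mathbb{F})$ denotes the set of surjective SD-maps $f:\mathbb{F}\to\mathbb{F}$ (a group under composition). $\operatorname{Aut}(\mathbb{F})$ is the group of field automorphisms of $\mathbb{F}$, and $\mathbb{F}_q$ denotes the finite field with $q$ elements. *)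

theory Defs
  imports "HOL-Computational_Algebra.Polynomial"
begin

definition sd_map :: "('a::field \<Rightarrow> 'b::field) \<Rightarrow> bool" where
  "sd_map f \<longleftrightarrow> (\<forall>x y. x \<noteq> y \<longrightarrow>
       f x \<noteq> f y \<and> f ((x + y) / (x - y)) = (f x + f y) / (f x - f y))"

definition SD :: "('a::field \<Rightarrow> 'a) set" where
  "SD = {f. surj f \<and> sd_map f}"

definition field_aut :: "('a::field \<Rightarrow> 'a) set" where
  "field_aut = {f. bij f \<and> (\<forall>x y. f (x + y) = f x + f y) \<and>
                   (\<forall>x y. f (x * y) = f x * f y) \<and> f 1 = 1}"

text \<open>x is algebraic over the prime field: it is a root of a nonzero polynomial
  whose coefficients lie in the prime subfield (the image of the integers).\<close>
definition algebraic_over_prime_field :: "'a::field \<Rightarrow> bool" where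
  "algebraic_over_prime_field x \<longleftrightarrow>
     (\<exists>q :: int poly. map_poly of_int q \<noteq> (0 :: 'a poly) \<and> poly (map_poly of_int q) x = 0)"

end

theory Submission
  imports Defs
begin

context
  fixes f :: "'a::field \<Rightarrow> 'a"
  assumes sd: "sd_map f" and two: "(2::'a) \<noteq> 0"
begin

lemma sdI: "x \<noteq> y \<Longrightarrow> f x \<noteq> f y \<and> f ((x + y) / (x - y)) = (f x + f y) / (f x - f y)"
  using sd unfolding sd_map_def by blast

lemma sd_inj: "f x = f y \<Longrightarrow> x = y"
  using sdI by blast

lemma one_ne_m1: "(1::'a) \<noteq> -1"
proof
  assume "(1::'a) = -1" then have "(2::'a) = 0" by (metis add_eq_0_iff one_add_one)
  with two show False by simp
qed

lemma sd_01: "f 0 = 0 \<and> f 1 = 1"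
proof -
  have key: "f 1 * (f x - f 0) = f x + f 0" if "x \<noteq> 0" for x
  proof -
    from sdI[of x 0] that have "f x \<noteq> f 0" and "f ((x + 0) / (x - 0)) = (f x + f 0) / (f x - f 0)" by auto
    moreover have "(x + 0) / (x - 0) = 1" using that by simp
    ultimately show ?thesis by (simp add: field_simps)
  qed
  have a: "f 1 * (f 1 - f 0) = f 1 + f 0" using key[of 1] by simp
  have b: "f 1 * (f (-1) - f 0) = f (-1) + f 0" using key[of "-1"] by simp
  have "f 1 \<noteq> f (-1)" using sd_inj one_ne_m1 by blast
  from a b have "f 1 * (f 1 - f (-1)) = f 1 - f (-1)" by (simp add: algebra_simps)
  with \<open>f 1 \<noteq> f (-1)\<close> have c: "f 1 = 1" by simp
  with a have "2 * f 0 = 0" by (simp add: algebra_simps)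
  with two c show ?thesis by simp
qed

lemma f0: "f 0 = 0" using sd_01 by simp
lemma f1: "f 1 = 1" using sd_01 by simp

lemma f_eq0: "f x = 0 \<longleftrightarrow> x = 0"
  using f0 sd_inj by metis

lemma fmult: "f (r * x) = f r * f x"
proof (cases "x = 0 \<or> r = 1")
  case True then show ?thesis using f0 f1 by auto
next
  case False
  then have x0: "x \<noteq> 0" and r1: "r \<noteq> 1" by auto
  have "x \<noteq> r * x" using x0 r1 by simp
  from sdI[OF this] have ne: "f x \<noteq> f (r*x)"
     and e1: "f ((x + r*x) / (x - r*x)) = (f x + f (r*x)) / (f x - f (r*x))" by auto
  have "(x + r*x) / (x - r*x) = (1 + r) / (1 - r)"
    using x0 r1 by (simp add: field_simps)
  moreover have "(1::'a) \<noteq> r" using r1 by simp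
  from sdI[OF this] f1 have ne2: "1 \<noteq> f r" and e2: "f ((1 + r) / (1 - r)) = (1 + f r) / (1 - f r)" by auto
  ultimately have "(f x + f (r*x)) / (f x - f (r*x)) = (1 + f r) / (1 - f r)" using e1 by simp
  then have "(f x + f (r*x)) * (1 - f r) = (1 + f r) * (f x - f (r*x))"
    using ne ne2 by (simp add: field_simps)
  then have "2 * f (r*x) = 2 * (f r * f x)" by (simp add: algebra_simps)
  with two show ?thesis by simp
qed

lemma fm1: "f (-1) = -1"
proof -
  have "f (-1) * f (-1) = 1" using fmult[of "-1" "-1"] f1 by simp
  then have "f (-1) = 1 \<or> f (-1) = -1"
    using square_eq_1_iff by blast
  moreover have "f (-1) \<noteq> 1" using f1 sd_inj one_ne_m1 by force
  ultimately show ?thesis by simp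
qed

lemma fneg: "f (- x) = - f x"
  using fmult[of "-1" x] fm1 by simp

lemma finv: "f (inverse x) = inverse (f x)"
proof (cases "x = 0")
  case True then show ?thesis using f0 by simp
next
  case False
  have "f x * f (inverse x) = 1" using fmult[of x "inverse x"] False f1 by simp
  then have "inverse (f x) = f (inverse x)" by (rule inverse_unique)
  then show ?thesis by simp
qed

lemma fdiv: "f (a / b) = f a / f b"
  by (simp add: divide_inverse fmult finv)

lemma fE: "f (x + y) * (f x - f y) = f (x - y) * (f x + f y)"
proof (cases "x = y")
  case True then show ?thesis using f0 by simp
next
  case False
  from sdI[OF this] have ne: "f x \<noteq> f y" and e: "f (x + y) / f (x - y) = (f x + f y) / (f x - f y)"
    by (auto simp: fdiv)
  have "f (x - y) \<noteq> 0" using False f_eq0 by simp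
  with ne e show ?thesis by (simp add: field_simps)
qed

lemma fQ:
  assumes r0: "r \<noteq> 0" and rm1: "r \<noteq> -1"
  shows "f 2 * (f r - 1) * f (r+1)^2 - 2 * f r ^ 2 * f (r+1) + f 2 * (f r + 1) = 0"
proof -
  define u v w A B c where "u = f r" "v = f (r+1)" "w = f (r - 1)" "A = f (r+2)" "B = f (r - 2)" "c = f 2"
  have E1: "v * (u - 1) = w * (u + 1)" using fE[of r 1] f1 unfolding u_v_w_A_B_c_def by simp
  have E2: "A * (v - 1) = u * (v + 1)" using fE[of "r+1" 1] f1 unfolding u_v_w_A_B_c_def
    by (simp add: add.assoc one_add_one)
  have E3: "u * (w - 1) = B * (w + 1)" using fE[of "r-1" 1] f1 unfolding u_v_w_A_B_c_def
    by (simp add: diff_diff_eq one_add_one)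
  have E4: "A * (u - c) = B * (u + c)" using fE[of r 2] unfolding u_v_w_A_B_c_def by simp
  have u0: "u \<noteq> 0" using r0 f_eq0 u_v_w_A_B_c_def by simp
  have u1: "u + 1 \<noteq> 0"
  proof
    assume "u + 1 = 0" then have "f r = -1" using u_v_w_A_B_c_def by (simp add: eq_neg_iff_add_eq_0)
    then have "f r = f (-1)" using fm1 by simp
    then show False using rm1 sd_inj by blast
  qed
  have "L = R" if "(u::'a) * L = u * R" for L R using that u0 by simp
  have "u * ((v+1)*(u-c)*(w+1)) = u * ((w-1)*(u+c)*(v-1))"
  proof -
    have "u * ((v+1)*(u-c)*(w+1)) = (u*(v+1))*(u-c)*(w+1)" by (simp add: ac_simps)
    also have "\<dots> = (A*(v-1))*(u-c)*(w+1)" using E2 by simp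
    also have "\<dots> = (A*(u-c))*(v-1)*(w+1)" by (simp add: ac_simps)
    also have "\<dots> = (B*(u+c))*(v-1)*(w+1)" using E4 by simp
    also have "\<dots> = (B*(w+1))*(u+c)*(v-1)" by (simp add: ac_simps)
    also have "\<dots> = (u*(w-1))*(u+c)*(v-1)" using E3 by simp
    also have "\<dots> = u * ((w-1)*(u+c)*(v-1))" by (simp add: ac_simps)
    finally show ?thesis .
  qed
  then have LR: "(v+1)*(u-c)*(w+1) = (w-1)*(u+c)*(v-1)" using u0 by simp
  have id: "-2 * (c*(u-1)*v^2 - 2*u^2*v + c*(u+1)) =
     (u+1)*((v+1)*(u-c)*(w+1) - (w-1)*(u+c)*(v-1)) - ((v+1)*(u-c) - (v-1)*(u+c))*(w*(u+1) - v*(u-1))"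
    by (simp add: algebra_simps power2_eq_square)
  have z1: "(v+1)*(u-c)*(w+1) - (w-1)*(u+c)*(v-1) = 0" using LR by simp
  have z2: "w*(u+1) - v*(u-1) = 0" using E1 by simp
  have "-2 * (c*(u-1)*v^2 - 2*u^2*v + c*(u+1)) = 0" using id unfolding z1 z2 by simp
  then have "(-2::'a) = 0 \<or> c*(u-1)*v^2 - 2*u^2*v + c*(u+1) = 0" by (simp only: mult_eq_0_iff)
  moreover have "(-2::'a) \<noteq> 0" using two by simp
  ultimately have "c*(u-1)*v^2 - 2*u^2*v + c*(u+1) = 0" by blast
  then show ?thesis unfolding u_v_w_A_B_c_def by simp
qed


lemma fK:
  assumes r0: "r \<noteq> 0" and rm1: "r \<noteq> -1" and sq: "f r ^ 2 \<noteq> -1"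
  shows "2 * f (r+1) = f 2 * (f r + 1)"
proof -
  define u v c where "u = f r" "v = f (r+1)" "c = f 2"
  have u0: "u \<noteq> 0" using r0 f_eq0 u_v_c_def by simp
  have q1: "c * (u - 1) * v^2 - 2 * u ^ 2 * v + c * (u + 1) = 0"
    using fQ[OF r0 rm1] u_v_c_def by simp
  have i0: "inverse r \<noteq> 0" using r0 by simp
  have im1: "inverse r \<noteq> -1"
  proof
    assume "inverse r = -1" then have "r = inverse (-1)" by (metis inverse_inverse_eq)
    then show False using rm1 by simp
  qed
  have "inverse r + 1 = (r+1) / r" using r0 by (simp add: field_simps)
  then have fi1: "f (inverse r + 1) = v / u" using u_v_c_def fdiv by simp
  have q2: "c * (inverse u - 1) * (v/u)^2 - 2 * (inverse u) ^ 2 * (v/u) + c * (inverse u + 1) = 0"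
    using fQ[OF i0 im1] fi1 finv u_v_c_def by simp
  have "u^3 * (c * (inverse u - 1) * (v/u)^2 - 2 * (inverse u) ^ 2 * (v/u) + c * (inverse u + 1))
      = c*(1-u)*v^2 - 2*v + c*u^2*(1+u)"
    using u0 by (simp add: field_simps power2_eq_square power3_eq_cube)
  with q2 have q3: "c*(1-u)*v^2 - 2*v + c*u^2*(1+u) = 0" by simp
  have "(u^2+1) * (c*(u+1) - 2*v) = (c * (u - 1) * v^2 - 2 * u ^ 2 * v + c * (u + 1)) + (c*(1-u)*v^2 - 2*v + c*u^2*(1+u))"
    by (simp add: algebra_simps power2_eq_square)
  also have "\<dots> = 0" using q1 q3 by simp
  finally have "(u^2+1) * (c*(u+1) - 2*v) = 0" .
  moreover have "u^2 + 1 \<noteq> 0" using sq eq_neg_iff_add_eq_0[of "u^2" 1] unfolding u_v_c_def by blast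
  ultimately have "c*(u+1) - 2*v = 0" by simp
  then show ?thesis using u_v_c_def by simp
qed


lemma f_succ:
  assumes c2: "f 2 = 2"
  shows "f (r+1) = f r + 1"
proof -
  consider "r = 0" | "r = -1" | "r \<noteq> 0" "r \<noteq> -1" by blast
  then show ?thesis
  proof cases
    case 1 then show ?thesis using f0 f1 by simp
  next
    case 2 then show ?thesis using f0 fm1 by simp
  next
    case 3
    define u v where "u = f r" "v = f (r+1)"
    show ?thesis
    proof (cases "f r ^ 2 = -1")
      case False
      from fK[OF 3 False] c2 have "2 * f (r+1) = 2 * (f r + 1)" by simp
      with two show ?thesis using mult_cancel_left[of 2 "f (r+1)" "f r + 1"] by blast
    next
      case True
      have "f (r * r) = f (-1)" using True fmult fm1 by (simp add: power2_eq_square)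
      then have rr: "r * r = -1" using sd_inj by blast
      have "(r+1)*(r+1) = 2 * r" using rr by (simp add: algebra_simps)
      then have "v * v = 2 * u" using fmult c2 u_v_def by metis
      moreover have "(u+1)*(u+1) = 2 * u" using True u_v_def by (simp add: algebra_simps power2_eq_square)
      ultimately have "v * v = (u+1)*(u+1)" by simp
      then have vv: "v = u + 1 \<or> v = -(u+1)" using square_eq_iff by blast
      have um1: "u + 1 \<noteq> 0"
      proof
        assume "u + 1 = 0" then have "f r = -1" using u_v_def by (simp add: eq_neg_iff_add_eq_0)
        then have "f r = f (-1)" using fm1 by simp
        then show False using 3 sd_inj by blast
      qed
      have q: "2 * (u - 1) * v^2 - 2 * u ^ 2 * v + 2 * (u + 1) = 0"
        using fQ[OF 3] c2 u_v_def by simp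
      have "v \<noteq> -(u+1)"
      proof
        assume v: "v = -(u+1)"
        have "2 * (u - 1) * v^2 - 2 * u ^ 2 * v + 2 * (u + 1) = 4 * u^2 * (u+1)"
          unfolding v by (simp add: algebra_simps power2_eq_square)
        also have "\<dots> = -4 * (u+1)" using True u_v_def by simp
        finally have e: "2 * (u - 1) * v^2 - 2 * u ^ 2 * v + 2 * (u + 1) = -4 * (u+1)" .
        have m: "-4 * (u+1) = 0" using trans[OF e[symmetric] q] .
        have "(2::'a) * 2 \<noteq> 0" by (rule no_zero_divisors[OF two two])
        then have "(-4::'a) \<noteq> 0" by simp
        then show False using m um1 mult_eq_0_iff[of "-4::'a" "u+1"] by blast
      qed
      with vv show ?thesis using u_v_def by simp
    qed
  qed
qed

lemma f_add:
  assumes c2: "f 2 = 2"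
  shows "f (x + y) = f x + f y"
proof (cases "y = 0")
  case True then show ?thesis using f0 by simp
next
  case False
  have "x + y = y * (x / y + 1)" using False by (simp add: field_simps)
  then have "f (x + y) = f y * f (x / y + 1)" using fmult by simp
  also have "\<dots> = f y * (f (x / y) + 1)" using f_succ[OF c2] by simp
  also have "\<dots> = f x + f y" using False f_eq0 by (simp add: fdiv field_simps)
  finally show ?thesis .
qed

lemma f_c3:
  assumes "(3::'a) = 0"
  shows "f 2 = 2"
proof -
  have "(2::'a) + 1 = 3" by simp
  then have "(2::'a) + 1 = 0" using assms by simp
  then have e: "(2::'a) = -1" by (simp add: eq_neg_iff_add_eq_0)
  have "f 2 = f (-1)" using e by (rule arg_cong)
  also have "\<dots> = -1" by (rule fm1)
  also have "\<dots> = 2" using e by (rule sym)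
  finally show ?thesis .
qed

lemma f_c:
  assumes three: "(3::'a) \<noteq> 0"
  shows "f 2 = 2 \<or> (f 2 = -2 \<and> (5::'a) = 0)"
proof -
  define c where "c = f 2"
  have c0: "c \<noteq> 0" using two f_eq0 c_def by simp
  have "(2::'a) + 1 = 3" by simp
  then have "(2::'a) \<noteq> -1" using three by (simp add: eq_neg_iff_add_eq_0)
  then have cm1: "c \<noteq> -1"
  proof (intro notI)
    assume "c = -1" then have "f 2 = f (-1)" using fm1 c_def by simp
    then show False using \<open>(2::'a) \<noteq> -1\<close> sd_inj by blast
  qed
  have "(2::'a) \<noteq> 1"
  proof
    assume h: "(2::'a) = 1"
    have "(2::'a) - 1 = 1" by simp
    then show False using h by simp
  qed
  then have c1: "c \<noteq> 1"
  proof (intro notI)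
    assume "c = 1" then have "f 2 = f 1" using f1 c_def by simp
    then show False using \<open>(2::'a) \<noteq> 1\<close> sd_inj by blast
  qed
  show ?thesis
  proof (cases "c^2 = -1")
    case True
    have "f 4 = f 2 * f 2" using fmult[of 2 2] by simp
    then have "f 4 = f (-1)" using True fm1 c_def by (simp add: power2_eq_square)
    then have "(4::'a) = -1" using sd_inj by blast
    then have "(4::'a) + 1 = 0" by (simp add: eq_neg_iff_add_eq_0)
    moreover have "(4::'a) + 1 = 5" by simp
    ultimately have h5: "(5::'a) = 0" by simp
    have "(c - 2) * (c + 2) = c^2 - 4" by (simp add: algebra_simps power2_eq_square)
    also have "\<dots> = -5" using True by simp
    also have "\<dots> = 0" using h5 by simp
    finally have "c = 2 \<or> c = -2" by (simp add: eq_neg_iff_add_eq_0)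
    then show ?thesis using h5 c_def by auto
  next
    case False
    have r0: "(2::'a) \<noteq> 0" using two .
    have rm1: "(2::'a) \<noteq> -1" using \<open>(2::'a) \<noteq> -1\<close> .
    have K: "2 * f 3 = c * (c + 1)"
      using fK[OF r0 rm1] False c_def by (simp add: numeral_3_eq_3 add.commute)
    have Q: "c * (c - 1) * f 3 ^ 2 - 2 * c ^ 2 * f 3 + c * (c + 1) = 0"
      using fQ[OF r0 rm1] c_def by (simp add: numeral_3_eq_3)
    have "c * (c + 1) * (c - 1) * (c + 1) * ((c - 2) * (c + 2))
        = c * (c - 1) * (2 * f 3) ^ 2 - 4 * c ^ 2 * (2 * f 3) + 4 * c * (c + 1)"
      unfolding K by (simp add: algebra_simps power2_eq_square)
    also have "\<dots> = 4 * (c * (c - 1) * f 3 ^ 2 - 2 * c ^ 2 * f 3 + c * (c + 1))"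
      by (simp add: algebra_simps power2_eq_square)
    also have "\<dots> = 4 * 0" by (simp only: Q)
    finally have "c * (c + 1) * (c - 1) * (c + 1) * ((c - 2) * (c + 2)) = 0" by simp
    then have "c = 0 \<or> c + 1 = 0 \<or> c - 1 = 0 \<or> c - 2 = 0 \<or> c + 2 = 0"
      by (simp only: mult_eq_0_iff) blast
    moreover have "c + 1 \<noteq> 0" using cm1 by (simp add: eq_neg_iff_add_eq_0[symmetric])
    moreover have "c - 1 \<noteq> 0" using c1 by simp
    ultimately have "c - 2 = 0 \<or> c + 2 = 0" using c0 by blast
    then have "c = 2 \<or> c = -2" by (auto simp add: eq_neg_iff_add_eq_0)
    moreover have "c \<noteq> -2"
    proof
      assume "c = -2"
      with K have "2 * f 3 = 2 * 1" by simp
      then have "f 3 = f 1" using two f1 mult_cancel_left[of 2 "f 3" 1] by simp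
      then have h31: "(3::'a) = 1" using sd_inj by blast
      have "(3::'a) - 1 = 2" by simp
      with h31 have "(2::'a) = 0" by simp
      with two show False by simp
    qed
    ultimately show ?thesis using c_def by simp
  qed
qed

lemma f_5:
  fixes r :: 'a
  assumes h5: "(5::'a) = 0" and cm2: "f 2 = -2"
  shows "r \<in> {0, 1, -1, 2, -2}"
proof (rule ccontr)
  assume nr: "r \<notin> {0, 1, -1, 2, -2}"
  have step: "f (s+1) = -(f s + 1)" if s: "s \<notin> {0, -1, 2, -2}" for s
  proof -
    have s0: "s \<noteq> 0" and sm1: "s \<noteq> -1" using s by auto
    have sq: "f s ^ 2 \<noteq> -1"
    proof
      assume "f s ^ 2 = -1"
      then have "f (s * s) = f (-1)" using fmult fm1 by (simp add: power2_eq_square)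
      then have "s * s = -1" using sd_inj by blast
      then have "(s - 2) * (s + 2) = -5" by (simp add: algebra_simps)
      then have "(s - 2) * (s + 2) = 0" using h5 by simp
      then have "s = 2 \<or> s = -2" by (simp add: eq_neg_iff_add_eq_0)
      then show False using s by auto
    qed
    from fK[OF s0 sm1 sq] cm2 have "2 * f (s+1) = 2 * (-(f s + 1))" by simp
    with two show ?thesis using mult_cancel_left[of 2 "f (s+1)" "-(f s + 1)"] by blast
  qed
  have a: "f (r+1) = -(f r + 1)" using step nr by auto
  have "r + 1 \<notin> {0, -1, 2, -2}"
  proof
    assume "r + 1 \<in> {0, -1, 2, -2}"
    then consider "r + 1 = 0" | "r + 1 = -1" | "r + 1 = 2" | "r + 1 = -2" by blast
    then show False
    proof cases
      case 1 then have "r = -1" by (simp add: eq_neg_iff_add_eq_0)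
      then show False using nr by simp
    next
      case 2 then have "r = -2" by (simp add: algebra_simps eq_neg_iff_add_eq_0)
      then show False using nr by simp
    next
      case 3 then have "r = 1" by (simp add: algebra_simps)
      then show False using nr by simp
    next
      case 4 then have "r = 2 - 5" by (simp add: algebra_simps eq_neg_iff_add_eq_0)
      then have "r = 2" using h5 by simp
      then show False using nr by simp
    qed
  qed
  then have b: "f (r+1+1) = -(f (r+1) + 1)" using step by blast
  have "f (r + 1 + 1) = f r" using a b by simp
  then have "r + 1 + 1 = r" using sd_inj by blast
  then have "(2::'a) = 0" by (simp add: algebra_simps)
  with two show False by simp
qed

end


lemma aut_SD:
  fixes f :: "'a::field \<Rightarrow> 'a"
  assumes "f \<in> field_aut"
  shows "f \<in> SD"
proof -
  from assms have b: "bij f" and ad: "\<And>x y. f (x + y) = f x + f y"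
    and mu: "\<And>x y. f (x * y) = f x * f y" and o: "f 1 = 1" by (auto simp: field_aut_def)
  have z: "f 0 = 0" using ad[of 0 0] by (metis add_cancel_right_right add_0)
  have ng: "f (- x) = - f x" for x
  proof -
    have "f x + f (- x) = 0" using ad[of x "-x"] z by simp
    then show ?thesis by (simp add: eq_neg_iff_add_eq_0 add.commute)
  qed
  have sb: "f (x - y) = f x - f y" for x y using ad[of x "-y"] ng by simp
  have iv: "f (inverse x) = inverse (f x)" for x
  proof (cases "x = 0")
    case True then show ?thesis using z by simp
  next
    case False
    have "f x * f (inverse x) = 1" using mu[of x "inverse x"] False o by simp
    then have "inverse (f x) = f (inverse x)" by (rule inverse_unique)
    then show ?thesis by simp
  qed
  have dv: "f (a / b) = f a / f b" for a b by (simp add: divide_inverse mu iv)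
  have i: "inj f" using b bij_is_inj by blast
  have "sd_map f" unfolding sd_map_def
  proof (intro allI impI conjI)
    fix x y :: 'a assume "x \<noteq> y"
    then show "f x \<noteq> f y" using i by (meson injD)
    show "f ((x + y) / (x - y)) = (f x + f y) / (f x - f y)" by (simp add: dv ad sb)
  qed
  then show ?thesis using b bij_is_surj unfolding SD_def by blast
qed

lemma SD_aut:
  fixes f :: "'a::field \<Rightarrow> 'a"
  assumes "f \<in> SD" and two: "(2::'a::field) \<noteq> 0" and c2: "f 2 = 2"
  shows "f \<in> field_aut"
proof -
  have sd: "sd_map f" and s: "surj f" using assms unfolding SD_def by auto
  have "inj f" using sd_inj[OF sd two] by (meson injI)
  then have "bij f" using s by (simp add: bij_def)
  then show ?thesis unfolding field_aut_def
    using f_add[OF sd two c2] fmult[OF sd two] f1[OF sd two] by blast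
qed

lemma card_zero_char:
  assumes "finite (UNIV :: 'a::field set)"
  shows "(of_nat (card (UNIV :: 'a set)) :: 'a) = 0"
proof -
  define h where "h = (\<lambda>x::'a. x + 1)"
  have ih: "inj h" unfolding h_def by (simp add: inj_def)
  have rh: "range h = UNIV" unfolding h_def
    by (metis (no_types, lifting) diff_add_cancel surj_def)
  have "(\<Sum>x\<in>UNIV. x) = (\<Sum>x\<in>range h. x)" using rh by simp
  also have "\<dots> = (\<Sum>x\<in>UNIV. h x)" using sum.reindex[OF inj_on_subset[OF ih subset_UNIV], of id] by simp
  also have "\<dots> = (\<Sum>x\<in>UNIV. x) + of_nat (card (UNIV :: 'a set))"
    unfolding h_def by (simp add: sum.distrib)
  finally show ?thesis by simp
qed

lemma F5_facts:
  assumes h5: "(5::'a::field) = 0" and two: "(2::'a) \<noteq> 0"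
  shows "(3::'a) \<noteq> 0" "(4::'a) \<noteq> 0" "(8::'a) = -2" "(16::'a) = 1"
    "card {0, 1, -1, 2, -2 :: 'a} = 5"
proof -
  show t: "(3::'a) \<noteq> 0"
  proof
    assume "(3::'a) = 0"
    moreover have "(2::'a) + 3 = 5" by simp
    ultimately show False using h5 two by simp
  qed
  show f: "(4::'a) \<noteq> 0"
  proof
    assume "(4::'a) = 0"
    moreover have "(4::'a) + 1 = 5" by simp
    ultimately show False using h5 by simp
  qed
  have "(8::'a) + 2 = 2 * 5" by simp
  then have "(8::'a) + 2 = 0" using h5 by simp
  then show "(8::'a) = -2" by (simp add: eq_neg_iff_add_eq_0)
  have "(16::'a) = 1 + 3 * 5" by simp
  then show "(16::'a) = 1" using h5 by simp
  have d1: "(1::'a) \<noteq> -1" using two by (simp add: eq_neg_iff_add_eq_0)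
  have d2: "(1::'a) \<noteq> 2"
  proof
    assume h: "(1::'a) = 2"
    have "(2::'a) - 1 = 1" by simp
    then show False using h by simp
  qed
  have d3: "(1::'a) \<noteq> -2" using t by (simp add: eq_neg_iff_add_eq_0)
  have d4: "(-1::'a) \<noteq> 2" using t by (simp add: eq_neg_iff_add_eq_0 add.commute)
  have d5: "(-1::'a) \<noteq> -2" using d2 by simp
  have d6: "(2::'a) \<noteq> -2" using f by (simp add: eq_neg_iff_add_eq_0)
  show "card {0, 1, -1, 2, -2 :: 'a} = 5"
    using d1 d2 d3 d4 d5 d6 two by simp
qed


lemma F5_inv_SD:
  assumes h5: "(5::'a::field) = 0" and two: "(2::'a) \<noteq> 0"
    and allS: "\<And>x::'a. x \<in> {0, 1, -1, 2, -2}"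
  shows "(inverse :: 'a \<Rightarrow> 'a) \<in> SD"
proof -
  have x4: "x ^ 4 = 1" if "x \<noteq> 0" for x :: 'a
  proof -
    have "(2::'a) ^ 4 = 16" by simp
    then have "(2::'a) ^ 4 = 1" using F5_facts(4)[OF h5 two] by simp
    then show ?thesis using allS[of x] that by auto
  qed
  have "surj (inverse :: 'a \<Rightarrow> 'a)" by (metis inverse_inverse_eq surjI)
  moreover have "sd_map (inverse :: 'a \<Rightarrow> 'a)" unfolding sd_map_def
  proof (intro allI impI conjI)
    fix x y :: 'a assume ne: "x \<noteq> y"
    then show "inverse x \<noteq> inverse y" by simp
    show "inverse ((x + y) / (x - y)) = (inverse x + inverse y) / (inverse x - inverse y)"
    proof (cases "x = 0 \<or> y = 0 \<or> x + y = 0")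
      case True
      then consider "x = 0" | "y = 0" | "y = - x" by (auto simp: eq_neg_iff_add_eq_0 add.commute)
      then show ?thesis
      proof cases
        case 1 then have "y \<noteq> 0" using ne by simp
        then show ?thesis using 1 by simp
      next
        case 2 then have "x \<noteq> 0" using ne by simp
        then show ?thesis using 2 by simp
      next
        case 3 then show ?thesis by simp
      qed
    next
      case False
      then have x0: "x \<noteq> 0" and y0: "y \<noteq> 0" and xy: "x + y \<noteq> 0" by auto
      have xmy: "x - y \<noteq> 0" using ne by simp
      have ymx: "y - x \<noteq> 0" using ne by simp
      have "(x^2 - y^2) * (x^2 + y^2) = x^4 - y^4" by (simp add: algebra_simps power2_eq_square power4_eq_xxxx)
      also have "\<dots> = 0" using x4[OF x0] x4[OF y0] by simp
      finally have p: "(x^2 - y^2) * (x^2 + y^2) = 0" .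
      have "x^2 - y^2 = (x - y) * (x + y)" by (simp add: algebra_simps power2_eq_square)
      then have "x^2 - y^2 \<noteq> 0" using xmy xy by simp
      with p have s: "x^2 + y^2 = 0" by simp
      have "(x - y) * (y - x) - (x + y) * (x + y) = -2 * (x^2 + y^2)"
        by (simp add: algebra_simps power2_eq_square)
      then have e: "(x - y) * (y - x) = (x + y) * (x + y)" using s by simp
      have l: "inverse ((x + y) / (x - y)) = (x - y) / (x + y)" by simp
      have r: "(inverse x + inverse y) / (inverse x - inverse y) = (y + x) / (y - x)"
        using x0 y0 ymx by (simp add: field_simps)
      have "(x - y) / (x + y) = (x + y) / (y - x)"
        using e xy ymx by (simp add: frac_eq_eq)
      then show ?thesis using l r by (simp add: add.commute)
    qed
  qed
  ultimately show ?thesis unfolding SD_def by blast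
qed

theorem theorem1p5:
  fixes p :: nat
  assumes "prime p" and "p > 2" and "CHAR('a::field) = p"
    and "\<forall>x::'a. algebraic_over_prime_field x"
  shows "(if finite (UNIV :: 'a set) \<and> card (UNIV :: 'a set) = 5
          then (SD :: ('a \<Rightarrow> 'a) set) = {id, \<lambda>w. w ^ 3}
          else (SD :: ('a \<Rightarrow> 'a) set) = field_aut)"
proof -
  have two: "(2::'a) \<noteq> 0"
  proof
    assume "(2::'a) = 0"
    then have "(of_nat 2 :: 'a) = 0" by simp
    then have "p dvd 2" using assms(3) of_nat_eq_0_iff_char_dvd by metis
    then have "p \<le> 2" by (simp add: dvd_imp_le)
    with assms(2) show False by simp
  qed
  have autSD: "field_aut \<subseteq> (SD :: ('a \<Rightarrow> 'a) set)" using aut_SD by blast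
  define S where "S = {0, 1, -1, 2, -2 :: 'a}"
  show ?thesis
  proof (cases "finite (UNIV :: 'a set) \<and> card (UNIV :: 'a set) = 5")
    case True
    have "(of_nat 5 :: 'a) = 0" using card_zero_char[of] True by metis
    then have h5: "(5::'a) = 0" by simp
    have "S = UNIV"
      using True F5_facts(5)[OF h5 two] unfolding S_def
      by (metis card_subset_eq subset_UNIV)
    then have allS: "\<And>x::'a. x \<in> {0, 1, -1, 2, -2}" unfolding S_def by blast
    have h8: "(8::'a) = -2" using F5_facts(3)[OF h5 two] .
    have three: "(3::'a) \<noteq> 0" using F5_facts(1)[OF h5 two] .
    have "(2::'a) * (-2) = -(4)" by simp
    also have "\<dots> = 1 - 5" by simp
    also have "\<dots> = 1" using h5 by simp
    finally have "(2::'a) * (-2) = 1" .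
    then have i2: "inverse (2::'a) = -2" by (rule inverse_unique)
    then have i2': "(1::'a) / 2 = -2" by (simp add: inverse_eq_divide)
    have cases5: "x = 0 \<or> x = 1 \<or> x = -1 \<or> x = 2 \<or> x = -2" for x :: 'a using allS[of x] by blast
    have cube_inv: "(\<lambda>w::'a. w ^ 3) = inverse"
    proof
      fix x :: 'a
      from cases5[of x] show "x ^ 3 = inverse x"
        by (elim disjE) (simp_all add: h8 i2 i2' h5)
    qed
    have "(SD :: ('a \<Rightarrow> 'a) set) = {id, \<lambda>w. w ^ 3}"
    proof
      show "SD \<subseteq> {id, \<lambda>w::'a. w ^ 3}"
      proof
        fix f :: "'a \<Rightarrow> 'a" assume fS: "f \<in> SD"
        then have sd: "sd_map f" unfolding SD_def by blast
        from f_c[OF sd two three] show "f \<in> {id, \<lambda>w. w ^ 3}"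
        proof
          assume c2: "f 2 = 2"
          have "f = id"
          proof
            fix x :: 'a
            from cases5[of x] show "f x = id x"
              by (elim disjE) (simp_all add: f0[OF sd two] f1[OF sd two] fm1[OF sd two] fneg[OF sd two] c2)
          qed
          then show ?thesis by simp
        next
          assume "f 2 = -2 \<and> (5::'a) = 0"
          then have c2: "f 2 = -2" by simp
          have "f = inverse"
          proof
            fix x :: 'a
            from cases5[of x] show "f x = inverse x"
              by (elim disjE) (simp_all add: f0[OF sd two] f1[OF sd two] fm1[OF sd two] fneg[OF sd two] c2 i2 i2' h5)
          qed
          then show ?thesis using cube_inv by simp
        qed
      qed
    next
      have "id \<in> (SD :: ('a \<Rightarrow> 'a) set)" unfolding SD_def sd_map_def by simp
      moreover have "(\<lambda>w::'a. w ^ 3) \<in> SD" using cube_inv F5_inv_SD[OF h5 two allS] by simp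
      ultimately show "{id, \<lambda>w::'a. w ^ 3} \<subseteq> SD" by blast
    qed
    then show ?thesis unfolding if_P[OF True] .
  next
    case False
    have "(SD :: ('a \<Rightarrow> 'a) set) = field_aut"
    proof
      show "SD \<subseteq> (field_aut :: ('a \<Rightarrow> 'a) set)"
      proof
        fix f :: "'a \<Rightarrow> 'a" assume fS: "f \<in> SD"
        then have sd: "sd_map f" unfolding SD_def by blast
        show "f \<in> field_aut"
        proof (cases "(3::'a) = 0")
          case True
          then show ?thesis using SD_aut[OF fS two] f_c3[OF sd two] by blast
        next
          case three: False
          from f_c[OF sd two three] show ?thesis
          proof
            assume "f 2 = 2" then show ?thesis using SD_aut[OF fS two] by blast
          next
            assume a: "f 2 = -2 \<and> (5::'a) = 0"
            then have "\<And>r. r \<in> S" using f_5[OF sd two] unfolding S_def by blast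
            then have "S = UNIV" by blast
            moreover have "finite S" unfolding S_def by simp
            moreover have "card S = 5" using F5_facts(5)[OF _ two] a unfolding S_def by blast
            ultimately show ?thesis using False by simp
          qed
        qed
      qed
    next
      show "field_aut \<subseteq> (SD :: ('a \<Rightarrow> 'a) set)" using autSD .
    qed
    then show ?thesis unfolding if_not_P[OF False] .
  qed
qed

end
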